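(* Let $d\ge 3$ and $h\ge 1$. The order of the sandpile group $G(d,h)$ is $$|G(d,h)| = d(d-1)^h\,[\theta(d,h+1)]^{d-1}\prod_{n=1}^{h-1}[\theta(d,h+1-n)]^{(d-2)d(d-1)^{n-1}},$$ where $\theta(d,n) := \frac{(d-1)^n-1}{d-2}$.
   Context: Let $\mathcal{T}(d,h)$ be the rooted tree in which the root $0$ has $d$ children, every vertex at distance $1,\dots,h-1$ from the root has $d-1$ children, and the vertices at distance $h$ are leaves. Let $V$ be its vertex set, $A$ its adjacency matrix, $\Delta := dI-A$, and $\Lambda\subset\mathbb{Z}^V$ the lattice spanned by the rows of $\Delta$. Then $G(d,h):=\mathbb{Z}^V/\Lambda$. *)

theory Defs
  imports Complex_Main "HOL-Algebra.Free_Abelian_Groups" "HOL-Algebra.Coset" "HOL-Algebra.Generated_Groups"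
begin

text \<open>Vertices of T(d,h) are encoded as paths from the root: the root is the empty list,
  the children of the root are [i] with i < d, and the children of a vertex xs with
  1 \<le> length xs < h are xs @ [i] with i < d - 1.\<close>

definition tree_verts :: "nat \<Rightarrow> nat \<Rightarrow> nat list set" where
  "tree_verts d h = {xs. length xs \<le> h \<and>
      (\<forall>j < length xs. xs ! j < (if j = 0 then d else d - 1))}"

definition tree_adj :: "nat list \<Rightarrow> nat list \<Rightarrow> bool" where
  "tree_adj u v \<longleftrightarrow> (\<exists>i. v = u @ [i]) \<or> (\<exists>i. u = v @ [i])"

definition delta_row :: "nat \<Rightarrow> nat \<Rightarrow> nat list \<Rightarrow> (nat list \<Rightarrow>\<^sub>0 int)" where
  "delta_row d h u = frag_cmul (int d) (frag_of u)
      - (\<Sum>v \<in> {v \<in> tree_verts d h. tree_adj u v}. frag_of v)"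

definition delta_lattice :: "nat \<Rightarrow> nat \<Rightarrow> (nat list \<Rightarrow>\<^sub>0 int) set" where
  "delta_lattice d h = generate (free_Abelian_group (tree_verts d h))
      (delta_row d h ` tree_verts d h)"

definition sandpile_group :: "nat \<Rightarrow> nat \<Rightarrow> (nat list \<Rightarrow>\<^sub>0 int) set monoid" where
  "sandpile_group d h = free_Abelian_group (tree_verts d h) Mod delta_lattice d h"

definition theta :: "nat \<Rightarrow> nat \<Rightarrow> real" where
  "theta d n = ((real d - 1) ^ n - 1) / (real d - 2)"

end

theory Submission
  imports Defs
begin
definition sgrp :: "'g::ab_group_add set \<Rightarrow> bool" where
  "sgrp B \<longleftrightarrow> 0 \<in> B \<and> (\<forall>x\<in>B. \<forall>y\<in>B. x - y \<in> B)"

definition resid :: "'g::ab_group_add set \<Rightarrow> 'g set \<Rightarrow> 'g set \<Rightarrow> bool" where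
  "resid A B R \<longleftrightarrow> R \<subseteq> A \<and> (\<forall>a\<in>A. \<exists>!r. r \<in> R \<and> a - r \<in> B)"

definition cosets :: "'g::ab_group_add set \<Rightarrow> 'g set \<Rightarrow> 'g set set" where
  "cosets A B = (\<lambda>a. (\<lambda>b. b + a) ` B) ` A"

lemma sgrp_0: "sgrp B \<Longrightarrow> 0 \<in> B" by (simp add: sgrp_def)
lemma sgrp_diff: "sgrp B \<Longrightarrow> x \<in> B \<Longrightarrow> y \<in> B \<Longrightarrow> x - y \<in> B" by (simp add: sgrp_def)
lemma sgrp_uminus: "sgrp B \<Longrightarrow> x \<in> B \<Longrightarrow> - x \<in> B"
  using sgrp_diff[of B 0 x] sgrp_0 by auto
lemma sgrp_add: "sgrp B \<Longrightarrow> x \<in> B \<Longrightarrow> y \<in> B \<Longrightarrow> x + y \<in> B"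
  using sgrp_diff[of B x "-y"] sgrp_uminus[of B y] by auto

lemma coset_eq_iff:
  assumes "sgrp B"
  shows "(\<lambda>b. b + a) ` B = (\<lambda>b. b + a') ` B \<longleftrightarrow> a - a' \<in> B"
proof
  assume "(\<lambda>b. b + a) ` B = (\<lambda>b. b + a') ` B"
  moreover have "a \<in> (\<lambda>b. b + a) ` B" using sgrp_0[OF assms] by force
  ultimately obtain b where "b \<in> B" "a = b + a'" by auto
  then show "a - a' \<in> B" by simp
next
  assume h: "a - a' \<in> B"
  have 1: "b + a \<in> (\<lambda>b. b + a') ` B" if "b \<in> B" for b
  proof -
    have "b + a = (b + (a - a')) + a'" by simp
    moreover have "b + (a - a') \<in> B" using sgrp_add[OF assms that h] .
    ultimately show ?thesis by blast
  qed
  have 2: "b + a' \<in> (\<lambda>b. b + a) ` B" if "b \<in> B" for b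
  proof -
    have "b + a' = (b - (a - a')) + a" by simp
    moreover have "b - (a - a') \<in> B" using sgrp_diff[OF assms that h] .
    ultimately show ?thesis by blast
  qed
  show "(\<lambda>b. b + a) ` B = (\<lambda>b. b + a') ` B" using 1 2 by blast
qed

lemma resid_card_cosets:
  assumes "sgrp B" "resid A B R"
  shows "card R = card (cosets A B)"
proof -
  have "bij_betw (\<lambda>a. (\<lambda>b. b + a) ` B) R (cosets A B)"
  proof (rule bij_betwI')
    fix x y assume xy: "x \<in> R" "y \<in> R"
    have "x \<in> A" using xy assms(2) by (auto simp: resid_def)
    then have u: "\<exists>!r. r \<in> R \<and> x - r \<in> B" using assms(2) by (auto simp: resid_def)
    show "((\<lambda>b. b + x) ` B = (\<lambda>b. b + y) ` B) = (x = y)"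
    proof
      assume "(\<lambda>b. b + x) ` B = (\<lambda>b. b + y) ` B"
      then have "x - y \<in> B" using coset_eq_iff[OF assms(1)] by blast
      moreover have "x - x \<in> B" using sgrp_0[OF assms(1)] by simp
      ultimately show "x = y" using u xy by blast
    qed simp
  next
    fix x assume "x \<in> R" then show "(\<lambda>b. b + x) ` B \<in> cosets A B"
      using assms(2) by (auto simp: resid_def cosets_def)
  next
    fix y assume "y \<in> cosets A B"
    then obtain a where a: "a \<in> A" "y = (\<lambda>b. b + a) ` B" by (auto simp: cosets_def)
    then obtain r where "r \<in> R" "a - r \<in> B" using assms(2) by (auto simp: resid_def)
    then show "\<exists>x\<in>R. y = (\<lambda>b. b + x) ` B" using a coset_eq_iff[OF assms(1)] by blast
  qed
  then show ?thesis by (rule bij_betw_same_card)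
qed

lemma resid_exists:
  assumes "sgrp B" "B \<subseteq> A" "sgrp A"
  shows "\<exists>R. resid A B R"
proof -
  define R where "R = (\<lambda>C. SOME r. r \<in> C) ` cosets A B"
  have mem: "(SOME r. r \<in> (\<lambda>b. b + a) ` B) \<in> (\<lambda>b. b + a) ` B" for a
    by (rule someI[of _ "0 + a"]) (use sgrp_0[OF assms(1)] in blast)
  have "resid A B R" unfolding resid_def
  proof (intro conjI ballI)
    show "R \<subseteq> A"
    proof
      fix r assume "r \<in> R"
      then obtain a where a: "a \<in> A" "r = (SOME r. r \<in> (\<lambda>b. b + a) ` B)" by (auto simp: R_def cosets_def)
      then obtain b where "b \<in> B" "r = b + a" using mem[of a] by auto
      then show "r \<in> A" using a assms sgrp_add by blast
    qed
  next
    fix a assume a: "a \<in> A"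
    define r where "r = (SOME r. r \<in> (\<lambda>b. b + a) ` B)"
    have rR: "r \<in> R" using a by (auto simp: R_def cosets_def r_def)
    obtain b where b: "b \<in> B" "r = b + a" using mem[of a] r_def by auto
    have ar: "a - r \<in> B" using b sgrp_uminus[OF assms(1) b(1)] by simp
    show "\<exists>!r. r \<in> R \<and> a - r \<in> B"
    proof (rule ex1I[of _ r])
      show "r \<in> R \<and> a - r \<in> B" using rR ar by simp
    next
      fix r' assume r': "r' \<in> R \<and> a - r' \<in> B"
      then obtain a' where a': "a' \<in> A" "r' = (SOME r. r \<in> (\<lambda>b. b + a') ` B)" by (auto simp: R_def cosets_def)
      obtain b' where b': "b' \<in> B" "r' = b' + a'" using mem[of a'] a' by auto
      have "a - a' \<in> B"
      proof -
        have "a - a' = (a - r') + b'" using b' by simp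
        then show ?thesis using sgrp_add[OF assms(1)] r' b' by metis
      qed
      then have "(\<lambda>b. b + a) ` B = (\<lambda>b. b + a') ` B" using coset_eq_iff[OF assms(1)] by blast
      then show "r' = r" using a' r_def by simp
    qed
  qed
  then show ?thesis by blast
qed

lemma resid_card_eq:
  assumes "sgrp B" "resid A B R1" "resid A B R2"
  shows "card R1 = card R2"
  using resid_card_cosets[OF assms(1,2)] resid_card_cosets[OF assms(1,3)] by simp

lemma resid_tower:
  assumes sA: "sgrp A" and sB: "sgrp B" and sC: "sgrp C" and "C \<subseteq> B" "B \<subseteq> A"
    and r1: "resid A B R1" and r2: "resid B C R2"
  shows "resid A C ((\<lambda>(x,y). x + y) ` (R1 \<times> R2)) \<and>
         card ((\<lambda>(x,y). x + y) ` (R1 \<times> R2)) = card R1 * card R2"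
proof
  have R1A: "R1 \<subseteq> A" and R2B: "R2 \<subseteq> B" using r1 r2 by (auto simp: resid_def)
  have u1: "\<And>a r r'. a \<in> A \<Longrightarrow> r \<in> R1 \<Longrightarrow> r' \<in> R1 \<Longrightarrow> a - r \<in> B \<Longrightarrow> a - r' \<in> B \<Longrightarrow> r = r'"
    using r1 unfolding resid_def by blast
  have u2: "\<And>a r r'. a \<in> B \<Longrightarrow> r \<in> R2 \<Longrightarrow> r' \<in> R2 \<Longrightarrow> a - r \<in> C \<Longrightarrow> a - r' \<in> C \<Longrightarrow> r = r'"
    using r2 unfolding resid_def by blast
  have inj: "inj_on (\<lambda>(x,y). x + y) (R1 \<times> R2)"
  proof (rule inj_onI, clarify)
    fix x y x' y' assume h: "x \<in> R1" "y \<in> R2" "x' \<in> R1" "y' \<in> R2" "x + y = x' + y'"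
    have "x - x' = y' - y" using h(5) by (simp add: algebra_simps)
    then have "x - x' \<in> B" using sgrp_diff[OF sB] h R2B by auto
    moreover have "x - x \<in> B" using sgrp_0[OF sB] by simp
    ultimately have "x = x'" using u1[of x x x'] h R1A by auto
    then show "x = x' \<and> y = y'" using h by simp
  qed
  then show "card ((\<lambda>(x,y). x + y) ` (R1 \<times> R2)) = card R1 * card R2"
    by (simp add: card_image card_cartesian_product)
  show "resid A C ((\<lambda>(x,y). x + y) ` (R1 \<times> R2))" unfolding resid_def
  proof (intro conjI ballI)
    show "(\<lambda>(x,y). x + y) ` (R1 \<times> R2) \<subseteq> A"
    proof (clarify)
      fix x y assume "x \<in> R1" "y \<in> R2"
      then have "x \<in> A" "y \<in> A" using R1A R2B assms(5) by auto
      then show "x + y \<in> A" using sgrp_add[OF sA] by blast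
    qed
  next
    fix a assume a: "a \<in> A"
    obtain r where r: "r \<in> R1" "a - r \<in> B" using r1 a by (auto simp: resid_def)
    obtain s where s: "s \<in> R2" "a - r - s \<in> C" using r2 r by (auto simp: resid_def)
    show "\<exists>!z. z \<in> (\<lambda>(x,y). x + y) ` (R1 \<times> R2) \<and> a - z \<in> C"
    proof (rule ex1I[of _ "r + s"])
      show "r + s \<in> (\<lambda>(x,y). x + y) ` (R1 \<times> R2) \<and> a - (r + s) \<in> C"
        using r s by (auto simp: algebra_simps)
    next
      fix z assume "z \<in> (\<lambda>(x,y). x + y) ` (R1 \<times> R2) \<and> a - z \<in> C"
      then obtain x y where z: "x \<in> R1" "y \<in> R2" "z = x + y" "a - z \<in> C" by auto
      have "a - x = (a - z) + y" using z by simp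
      moreover have "a - z \<in> B" "y \<in> B" using z R2B assms(4) by auto
      ultimately have "a - x \<in> B" using sgrp_add[OF sB] by metis
      then have "x = r" using u1[of a x r] r z a by auto
      then have "y = s" using u2[of "a - r" y s] z s r by (auto simp: algebra_simps)
      then show "z = r + s" using z \<open>x = r\<close> by simp
    qed
  qed
qed

lemma resid_hom:
  assumes add: "\<And>x y. f (x + y) = f x + f y" and inj: "inj_on f A" and sA: "sgrp A"
    and "C \<subseteq> A" and r: "resid A C R"
  shows "resid (f ` A) (f ` C) (f ` R) \<and> card (f ` R) = card R"
proof
  have f0: "f 0 = 0" using add[of 0 0] by simp
  have fminus: "f (x - y) = f x - f y" for x y
    using add[of "x - y" y] by (simp add: algebra_simps)
  have RA: "R \<subseteq> A" using r by (auto simp: resid_def)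
  show "card (f ` R) = card R" using inj RA by (meson card_image inj_on_subset)
  show "resid (f ` A) (f ` C) (f ` R)" unfolding resid_def
  proof (intro conjI ballI)
    show "f ` R \<subseteq> f ` A" using RA by auto
  next
    fix fa assume "fa \<in> f ` A"
    then obtain a where a: "a \<in> A" "fa = f a" by auto
    obtain r0 where r0: "r0 \<in> R" "a - r0 \<in> C" using r a by (auto simp: resid_def)
    show "\<exists>!z. z \<in> f ` R \<and> fa - z \<in> f ` C"
    proof (rule ex1I[of _ "f r0"])
      show "f r0 \<in> f ` R \<and> fa - f r0 \<in> f ` C" using r0 a fminus[of a r0] by (metis image_eqI)
    next
      fix z assume "z \<in> f ` R \<and> fa - z \<in> f ` C"
      then obtain s c where s: "s \<in> R" "z = f s" "c \<in> C" "f a - f s = f c" using a by auto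
      have "f (a - s) = f c" using s fminus by simp
      moreover have "a - s \<in> A" using sgrp_diff[OF sA] a s RA by auto
      ultimately have "a - s = c" using inj assms(4) s by (auto dest: inj_onD)
      then have "s = r0" using r a s r0 unfolding resid_def by blast
      then show "z = f r0" using s by simp
    qed
  qed
qed

definition FA :: "'a set \<Rightarrow> ('a \<Rightarrow>\<^sub>0 int) set" where
  "FA V = {x. Poly_Mapping.keys x \<subseteq> V}"

definition zspan :: "'a set \<Rightarrow> ('a \<Rightarrow> ('a \<Rightarrow>\<^sub>0 int)) \<Rightarrow> ('a \<Rightarrow>\<^sub>0 int) set" where
  "zspan V g = frag_extend g ` FA V"

lemma sum_single:
  assumes "finite A" "v \<in> A" "\<And>w. w \<in> A \<Longrightarrow> w \<noteq> v \<Longrightarrow> f w = 0"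
  shows "sum f A = f v"
  using assms by (simp add: sum.remove sum.neutral)

lemma sgrp_FA: "sgrp (FA V)"
  unfolding sgrp_def FA_def using keys_diff by fastforce

lemma fe_eq_sum:
  assumes "finite V" "Poly_Mapping.keys c \<subseteq> V"
  shows "frag_extend g c = (\<Sum>w\<in>V. frag_cmul (poly_mapping.lookup c w) (g w))"
  unfolding frag_extend_def
  by (rule sum.mono_neutral_left) (use assms in \<open>auto simp: in_keys_iff\<close>)

lemma lookup_fe:
  assumes "finite V" "Poly_Mapping.keys c \<subseteq> V"
  shows "poly_mapping.lookup (frag_extend g c) v =
     (\<Sum>w\<in>V. poly_mapping.lookup c w * poly_mapping.lookup (g w) v)"
  using fe_eq_sum[OF assms, of g] by (simp add: lookup_sum)

lemma fe_in_FA: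
  assumes "\<And>w. w \<in> V \<Longrightarrow> Poly_Mapping.keys (g w) \<subseteq> V" "c \<in> FA V"
  shows "frag_extend g c \<in> FA V"
  using keys_frag_extend[of g c] assms unfolding FA_def by blast

lemma zspan_sub: "(\<And>w. w \<in> V \<Longrightarrow> Poly_Mapping.keys (g w) \<subseteq> V) \<Longrightarrow> zspan V g \<subseteq> FA V"
  unfolding zspan_def using fe_in_FA by blast

lemma sgrp_zspan: "sgrp (zspan V g)"
  unfolding sgrp_def zspan_def
proof (intro conjI ballI)
  show "0 \<in> frag_extend g ` FA V"
    by (rule image_eqI[of _ _ 0]) (auto simp: FA_def)
next
  fix x y assume "x \<in> frag_extend g ` FA V" "y \<in> frag_extend g ` FA V"
  then obtain a b where "a \<in> FA V" "b \<in> FA V" "x = frag_extend g a" "y = frag_extend g b" by auto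
  then show "x - y \<in> frag_extend g ` FA V"
    using sgrp_diff[OF sgrp_FA] frag_extend_diff by (metis image_eqI)
qed

lemma box_lemma0:
  fixes g :: "'a \<Rightarrow> ('a \<Rightarrow>\<^sub>0 int)" and rk :: "'a \<Rightarrow> nat"
  assumes fin: "finite V"
    and gk: "\<And>v. v \<in> V \<Longrightarrow> Poly_Mapping.keys (g v) \<subseteq> V"
    and pos: "\<And>v. v \<in> V \<Longrightarrow> poly_mapping.lookup (g v) v > 0"
    and tri: "\<And>v w. v \<in> V \<Longrightarrow> poly_mapping.lookup (g v) w \<noteq> 0 \<Longrightarrow> w = v \<or> rk w < rk v"
  defines "Box \<equiv> {x. Poly_Mapping.keys x \<subseteq> V \<and> (\<forall>v\<in>V. 0 \<le> poly_mapping.lookup x v \<and>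
                     poly_mapping.lookup x v < poly_mapping.lookup (g v) v)}"
  shows "resid (FA V) (zspan V g) Box \<and> card Box = (\<Prod>v\<in>V. nat (poly_mapping.lookup (g v) v))"
proof
  define a where "a v = poly_mapping.lookup (g v) v" for v
  note lk = lookup_fe[OF fin]
  have uniq: "x = y" if xy: "x \<in> Box" "y \<in> Box" and c: "c \<in> FA V" "x - y = frag_extend g c" for x y c
  proof (cases "c = 0")
    case True then show ?thesis using c by simp
  next
    case False
    define S where "S = Poly_Mapping.keys c"
    have S: "finite S" "S \<noteq> {}" "S \<subseteq> V" using False c by (auto simp: S_def FA_def)
    define m where "m = Max (rk ` S)"
    obtain v where v: "v \<in> S" "rk v = m" using S unfolding m_def
      by (metis (mono_tags, lifting) Max_in finite_imageI image_iff image_is_empty)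
    have vmax: "rk w \<le> rk v" if "w \<in> S" for w using S that v unfolding m_def by auto
    have "poly_mapping.lookup (x - y) v = poly_mapping.lookup c v * a v"
    proof -
      have "poly_mapping.lookup (x - y) v = (\<Sum>w\<in>V. poly_mapping.lookup c w * poly_mapping.lookup (g w) v)"
        using c lk by (simp add: FA_def)
      also have "\<dots> = poly_mapping.lookup c v * poly_mapping.lookup (g v) v"
      proof (rule sum_single[OF fin])
        show "v \<in> V" using v S by auto
        fix w assume w: "w \<in> V" "w \<noteq> v"
        show "poly_mapping.lookup c w * poly_mapping.lookup (g w) v = 0"
        proof (cases "poly_mapping.lookup c w = 0")
          case False
          then have "w \<in> S" by (simp add: S_def in_keys_iff)
          then have "rk w \<le> rk v" using vmax by auto
          then have "poly_mapping.lookup (g w) v = 0" using tri[OF w(1), of v] w by auto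
          then show ?thesis by simp
        qed simp
      qed
      finally show ?thesis by (simp add: a_def)
    qed
    moreover have "poly_mapping.lookup c v \<noteq> 0" using v by (simp add: S_def in_keys_iff)
    moreover have "0 < a v" using pos S v by (auto simp: a_def)
    moreover have "\<bar>poly_mapping.lookup x v - poly_mapping.lookup y v\<bar> < a v"
    proof -
      have "v \<in> V" using v S by auto
      then have "0 \<le> poly_mapping.lookup x v" "poly_mapping.lookup x v < a v"
        "0 \<le> poly_mapping.lookup y v" "poly_mapping.lookup y v < a v"
        using xy unfolding Box_def a_def by auto
      then show ?thesis by linarith
    qed
    ultimately have False
    proof -
      assume h: "poly_mapping.lookup (x - y) v = poly_mapping.lookup c v * a v"
        "poly_mapping.lookup c v \<noteq> 0" "0 < a v"
        "\<bar>poly_mapping.lookup x v - poly_mapping.lookup y v\<bar> < a v"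
      have "\<bar>poly_mapping.lookup c v * a v\<bar> = \<bar>poly_mapping.lookup c v\<bar> * a v"
        using h(3) by (simp add: abs_mult)
      also have "\<dots> \<ge> 1 * a v" using h(2,3) by (intro mult_right_mono) auto
      finally show False using h(1,4) by (simp add: lookup_minus)
    qed
    then show ?thesis ..
  qed
  define N where "N = Suc (Max (rk ` V))"
  have rkN: "rk v < N" if "v \<in> V" for v using fin that unfolding N_def
    by (simp add: le_imp_less_Suc)
  have ex: "\<forall>x\<in>FA V. \<exists>c\<in>FA V. \<forall>v\<in>V. N - k \<le> rk v \<longrightarrow>
      0 \<le> poly_mapping.lookup (x - frag_extend g c) v \<and> poly_mapping.lookup (x - frag_extend g c) v < a v" for k
  proof (induction k)
    case 0
    show ?case
    proof
      fix x assume "x \<in> FA V"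
      show "\<exists>c\<in>FA V. \<forall>v\<in>V. N - 0 \<le> rk v \<longrightarrow> 0 \<le> poly_mapping.lookup (x - frag_extend g c) v \<and>
          poly_mapping.lookup (x - frag_extend g c) v < a v"
        by (rule bexI[of _ 0]) (use rkN in \<open>force simp: FA_def\<close>)+
    qed
  next
    case (Suc k)
    show ?case
    proof
      fix x assume x: "x \<in> FA V"
      obtain c where c: "c \<in> FA V" "\<forall>v\<in>V. N - k \<le> rk v \<longrightarrow>
         0 \<le> poly_mapping.lookup (x - frag_extend g c) v \<and> poly_mapping.lookup (x - frag_extend g c) v < a v"
        using Suc x by blast
      define y where "y = x - frag_extend g c"
      define qf where "qf w = (if w \<in> V \<and> rk w = N - Suc k then poly_mapping.lookup y w div a w else 0)" for w
      have fq: "finite {w. qf w \<noteq> 0}" using fin by (rule finite_subset[rotated]) (auto simp: qf_def split: if_splits)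
      define q where "q = Abs_poly_mapping qf"
      have lq: "poly_mapping.lookup q = qf" using fq by (simp add: q_def)
      have qFA: "q \<in> FA V" by (auto simp: FA_def in_keys_iff lq qf_def split: if_split_asm)
      have cq: "c + q \<in> FA V" using c qFA sgrp_add[OF sgrp_FA] by blast
      have eq: "x - frag_extend g (c + q) = y - frag_extend g q"
        by (simp add: y_def frag_extend_add)
      have lfq: "poly_mapping.lookup (frag_extend g q) v = (\<Sum>w\<in>V. qf w * poly_mapping.lookup (g w) v)" for v
        using lk[of q g v] qFA by (simp add: FA_def lq)
      show "\<exists>c\<in>FA V. \<forall>v\<in>V. N - Suc k \<le> rk v \<longrightarrow>
          0 \<le> poly_mapping.lookup (x - frag_extend g c) v \<and> poly_mapping.lookup (x - frag_extend g c) v < a v"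
      proof (rule bexI[OF _ cq], intro ballI impI)
        fix v assume v: "v \<in> V" "N - Suc k \<le> rk v"
        show "0 \<le> poly_mapping.lookup (x - frag_extend g (c + q)) v \<and>
              poly_mapping.lookup (x - frag_extend g (c + q)) v < a v"
        proof (cases "rk v = N - Suc k")
          case True
          have "poly_mapping.lookup (frag_extend g q) v = qf v * poly_mapping.lookup (g v) v"
            unfolding lfq
          proof (rule sum_single[OF fin v(1)])
            fix w assume w: "w \<in> V" "w \<noteq> v"
            show "qf w * poly_mapping.lookup (g w) v = 0"
            proof (cases "qf w = 0")
              case False
              then have "rk w = N - Suc k" by (auto simp: qf_def split: if_splits)
              then have "poly_mapping.lookup (g w) v = 0" using tri[OF w(1), of v] w True by auto
              then show ?thesis by simp
            qed simp
          qed
          then have "poly_mapping.lookup (x - frag_extend g (c + q)) v =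
              poly_mapping.lookup y v - (poly_mapping.lookup y v div a v) * a v"
            using True v by (simp add: eq lookup_minus qf_def a_def)
          also have "\<dots> = poly_mapping.lookup y v mod a v" by (simp add: minus_div_mult_eq_mod)
          finally show ?thesis using pos[OF v(1)] by (simp add: a_def)
        next
          case False
          have "poly_mapping.lookup (frag_extend g q) v = 0"
            unfolding lfq
          proof (rule sum.neutral, intro ballI)
            fix w assume w: "w \<in> V"
            show "qf w * poly_mapping.lookup (g w) v = 0"
            proof (cases "qf w = 0")
              case False
              then have "rk w = N - Suc k" by (auto simp: qf_def split: if_splits)
              then have "poly_mapping.lookup (g w) v = 0" using tri[OF w(1), of v] v \<open>rk v \<noteq> N - Suc k\<close> by auto
              then show ?thesis by simp
            qed simp
          qed
          moreover have "N - k \<le> rk v" using v False by linarith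
          ultimately show ?thesis using c(2) v by (simp add: eq y_def lookup_minus)
        qed
      qed
    qed
  qed
  show "resid (FA V) (zspan V g) Box" unfolding resid_def
  proof (intro conjI ballI)
    show "Box \<subseteq> FA V" by (auto simp: Box_def FA_def)
  next
    fix x assume x: "x \<in> FA V"
    obtain c where c: "c \<in> FA V" "\<forall>v\<in>V. 0 \<le> poly_mapping.lookup (x - frag_extend g c) v \<and>
        poly_mapping.lookup (x - frag_extend g c) v < a v"
      using ex[of N] x by auto
    have r: "x - frag_extend g c \<in> Box"
    proof -
      have "x - frag_extend g c \<in> FA V"
        using sgrp_diff[OF sgrp_FA x fe_in_FA[OF gk c(1)]] by simp
      then show ?thesis using c(2) by (simp add: Box_def FA_def a_def)
    qed
    show "\<exists>!r. r \<in> Box \<and> x - r \<in> zspan V g"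
    proof (rule ex1I[of _ "x - frag_extend g c"])
      show "x - frag_extend g c \<in> Box \<and> x - (x - frag_extend g c) \<in> zspan V g"
        using r c by (simp add: zspan_def)
    next
      fix r assume "r \<in> Box \<and> x - r \<in> zspan V g"
      then obtain c' where c': "r \<in> Box" "c' \<in> FA V" "x - r = frag_extend g c'" by (auto simp: zspan_def)
      have "r - (x - frag_extend g c) = frag_extend g (c - c')"
        using c' by (simp add: frag_extend_diff algebra_simps)
      moreover have "c - c' \<in> FA V" using sgrp_diff[OF sgrp_FA c(1) c'(2)] .
      ultimately show "r = x - frag_extend g c" using uniq[OF c'(1) r] by blast
    qed
  qed
  have "bij_betw (\<lambda>x. restrict (poly_mapping.lookup x) V) Box (PiE V (\<lambda>v. {0..<a v}))"
  proof (rule bij_betwI')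
    fix x y assume "x \<in> Box" "y \<in> Box"
    then have k: "Poly_Mapping.keys x \<subseteq> V" "Poly_Mapping.keys y \<subseteq> V" by (auto simp: Box_def)
    show "(restrict (poly_mapping.lookup x) V = restrict (poly_mapping.lookup y) V) = (x = y)"
    proof
      assume h: "restrict (poly_mapping.lookup x) V = restrict (poly_mapping.lookup y) V"
      show "x = y"
      proof (rule poly_mapping_eqI)
        fix w show "poly_mapping.lookup x w = poly_mapping.lookup y w"
        proof (cases "w \<in> V")
          case True then show ?thesis using fun_cong[OF h, of w] by simp
        next
          case False then show ?thesis using k by (metis in_keys_iff subsetD)
        qed
      qed
    qed simp
  next
    fix x assume "x \<in> Box" then show "restrict (poly_mapping.lookup x) V \<in> PiE V (\<lambda>v. {0..<a v})"
      by (auto simp: Box_def a_def)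
  next
    fix f assume f: "f \<in> PiE V (\<lambda>v. {0..<a v})"
    define F where "F w = (if w \<in> V then f w else 0)" for w
    have "finite {w. F w \<noteq> 0}" using fin by (rule finite_subset[rotated]) (auto simp: F_def)
    then have lF: "poly_mapping.lookup (Abs_poly_mapping F) = F" by simp
    show "\<exists>x\<in>Box. f = restrict (poly_mapping.lookup x) V"
    proof (rule bexI[of _ "Abs_poly_mapping F"])
      show "f = restrict (poly_mapping.lookup (Abs_poly_mapping F)) V"
        using f by (auto simp: lF F_def PiE_def extensional_def restrict_def)
      show "Abs_poly_mapping F \<in> Box"
        using f by (auto simp: Box_def lF F_def in_keys_iff a_def)
    qed
  qed
  then have "card Box = card (PiE V (\<lambda>v. {0..<a v}))" by (rule bij_betw_same_card)
  also have "\<dots> = (\<Prod>v\<in>V. nat (a v))" using fin by (simp add: card_PiE)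
  finally show "card Box = (\<Prod>v\<in>V. nat (poly_mapping.lookup (g v) v))" by (simp add: a_def)
qed

lemma box_lemma:
  fixes g :: "'a \<Rightarrow> ('a \<Rightarrow>\<^sub>0 int)" and rk :: "'a \<Rightarrow> nat"
  assumes fin: "finite V"
    and gk: "\<And>v. v \<in> V \<Longrightarrow> Poly_Mapping.keys (g v) \<subseteq> V"
    and pos: "\<And>v. v \<in> V \<Longrightarrow> poly_mapping.lookup (g v) v > 0"
    and tri: "\<And>v w. v \<in> V \<Longrightarrow> poly_mapping.lookup (g v) w \<noteq> 0 \<Longrightarrow> w = v \<or> rk w < rk v"
  shows "\<exists>B. resid (FA V) (zspan V g) B \<and> card B = (\<Prod>v\<in>V. nat (poly_mapping.lookup (g v) v))"
proof -
  define Box where "Box = {x. Poly_Mapping.keys x \<subseteq> V \<and> (\<forall>v\<in>V. 0 \<le> poly_mapping.lookup x v \<and>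
                     poly_mapping.lookup x v < poly_mapping.lookup (g v) v)}"
  have "resid (FA V) (zspan V g) Box \<and> card Box = (\<Prod>v\<in>V. nat (poly_mapping.lookup (g v) v))"
    unfolding Box_def by (rule box_lemma0[OF fin gk pos tri])
  then show ?thesis by blast
qed

definition th :: "nat \<Rightarrow> nat \<Rightarrow> int" where
  "th d m = (\<Sum>i<m. (int d - 1) ^ i)"

lemma th_0[simp]: "th d 0 = 0" by (simp add: th_def)
lemma th_1[simp]: "th d 1 = 1" by (simp add: th_def)
lemma th_Suc0[simp]: "th d (Suc 0) = 1" by (simp add: th_def)
lemma th_Suc: "th d (Suc m) = th d m + (int d - 1) ^ m" by (simp add: th_def)
lemma th_rec: "m \<ge> 1 \<Longrightarrow> th d (Suc m) = int d * th d m - (int d - 1) * th d (m - 1)"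
proof -
  assume "m \<ge> 1"
  then obtain k where m: "m = Suc k" by (cases m) auto
  have "(int d - 1) ^ Suc k = (int d - 1) * (int d - 1) ^ k" by simp
  then show ?thesis unfolding m by (simp add: th_Suc algebra_simps)
qed
lemma th_pos: "d \<ge> 2 \<Longrightarrow> m \<ge> 1 \<Longrightarrow> th d m \<ge> 1"
proof (induction m)
  case (Suc m)
  then show ?case
  proof (cases "m = 0")
    case False
    then have "th d m \<ge> 1" using Suc by auto
    moreover have "(int d - 1) ^ m \<ge> 0" using Suc by simp
    ultimately show ?thesis by (simp add: th_Suc)
  qed simp
qed simp

locale tree =
  fixes d h :: nat
  assumes d3: "d \<ge> 3" and h1: "h \<ge> 1"
begin

abbreviation "V \<equiv> tree_verts d h"

definition nc :: "nat list \<Rightarrow> nat" where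
  "nc w = (if length w < h then (if w = [] then d else d - 1) else 0)"

definition children :: "nat list \<Rightarrow> nat list set" where
  "children w = (\<lambda>i. w @ [i]) ` {..<nc w}"

lemma finV: "finite V"
proof -
  have "V \<subseteq> {xs. set xs \<subseteq> {..<d} \<and> length xs \<le> h}"
  proof
    fix xs assume "xs \<in> V"
    then have xs: "length xs \<le> h" "\<forall>j<length xs. xs ! j < (if j = 0 then d else d - 1)"
      by (auto simp: tree_verts_def)
    have "set xs \<subseteq> {..<d}"
    proof
      fix x assume "x \<in> set xs"
      then obtain j where "j < length xs" "xs ! j = x" by (auto simp: in_set_conv_nth)
      then show "x \<in> {..<d}" using xs(2) by (auto split: if_splits)
    qed
    then show "xs \<in> {xs. set xs \<subseteq> {..<d} \<and> length xs \<le> h}" using xs by auto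
  qed
  moreover have "finite {xs. set xs \<subseteq> {..<d} \<and> length xs \<le> h}"
    by (rule finite_lists_length_le) simp
  ultimately show ?thesis by (rule finite_subset)
qed

lemma nil_V[simp]: "[] \<in> V" by (simp add: tree_verts_def)

lemma len_V: "v \<in> V \<Longrightarrow> length v \<le> h" by (simp add: tree_verts_def)

lemma snoc_V: "v @ [i] \<in> V \<longleftrightarrow> v \<in> V \<and> length v < h \<and> i < (if v = [] then d else d - 1)"
proof
  assume h1: "v @ [i] \<in> V"
  then have a: "length v < h" "\<forall>j<Suc (length v). (v @ [i]) ! j < (if j = 0 then d else d - 1)"
    by (auto simp: tree_verts_def)
  have "\<forall>j<length v. v ! j < (if j = 0 then d else d - 1)"
  proof (intro allI impI)
    fix j assume "j < length v"
    then show "v ! j < (if j = 0 then d else d - 1)" using a(2)[rule_format, of j] by (simp add: nth_append)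
  qed
  moreover have "i < (if length v = 0 then d else d - 1)" using a(2)[rule_format, of "length v"] by simp
  ultimately show "v \<in> V \<and> length v < h \<and> i < (if v = [] then d else d - 1)"
    using a(1) by (simp add: tree_verts_def)
next
  assume h1: "v \<in> V \<and> length v < h \<and> i < (if v = [] then d else d - 1)"
  show "v @ [i] \<in> V" unfolding tree_verts_def
  proof (intro CollectI conjI allI impI)
    show "length (v @ [i]) \<le> h" using h1 by simp
    fix j assume j: "j < length (v @ [i])"
    show "(v @ [i]) ! j < (if j = 0 then d else d - 1)"
    proof (cases "j < length v")
      case True then show ?thesis using h1 by (simp add: nth_append tree_verts_def)
    next
      case False then have "j = length v" using j by simp
      then show ?thesis using h1 by (simp add: nth_append)
    qed
  qed
qed

lemma prefix_V: "v @ s \<in> V \<Longrightarrow> v \<in> V"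
proof (induction s rule: rev_induct)
  case (snoc x xs)
  then show ?case using snoc_V[of "v @ xs" x] by simp
qed simp

lemma butlast_V: "v \<in> V \<Longrightarrow> butlast v \<in> V"
  by (metis append_butlast_last_id butlast.simps(1) prefix_V)

lemma children_V: "children w = {u. u \<in> V \<and> (\<exists>i. u = w @ [i])}" if "w \<in> V"
proof -
  have "i < nc w \<longleftrightarrow> w @ [i] \<in> V" for i using that by (simp add: nc_def snoc_V)
  then show ?thesis unfolding children_def by auto
qed

lemma card_children: "card (children w) = nc w"
  unfolding children_def by (simp add: card_image inj_on_def)

lemma finite_children: "finite (children w)" unfolding children_def by simp

lemma neighbors:
  assumes "w \<in> V"
  shows "{u \<in> V. tree_adj u w} = (if w = [] then {} else {butlast w}) \<union> children w"
proof -
  have "tree_adj u w \<longleftrightarrow> (w \<noteq> [] \<and> u = butlast w) \<or> (\<exists>i. u = w @ [i])" for u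
    unfolding tree_adj_def
    by (metis append_butlast_last_id butlast_snoc snoc_eq_iff_butlast)
  then show ?thesis using children_V[OF assms] butlast_V[OF assms] by auto
qed

lemma sum_neighbors:
  assumes "w \<in> V"
  shows "(\<Sum>u\<in>{u \<in> V. tree_adj u w}. f u) =
     (if w = [] then 0 else f (butlast w)) + (\<Sum>i<nc w. f (w @ [i]))"
proof -
  have disj: "(if w = [] then {} else {butlast w}) \<inter> children w = {}"
  proof -
    have *: "length u = Suc (length w)" if "u \<in> children w" for u using that unfolding children_def by auto
    have "butlast w \<notin> children w" using *[of "butlast w"] by auto
    then show ?thesis by auto
  qed
  have "(\<Sum>u\<in>{u \<in> V. tree_adj u w}. f u) = (\<Sum>u\<in>(if w = [] then {} else {butlast w}). f u) + (\<Sum>u\<in>children w. f u)"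
    unfolding neighbors[OF assms] by (rule sum.union_disjoint) (auto simp: finite_children disj)
  moreover have "(\<Sum>u\<in>children w. f u) = (\<Sum>i<nc w. f (w @ [i]))"
    unfolding children_def by (subst sum.reindex) (auto simp: inj_on_def)
  ultimately show ?thesis by simp
qed

end

context tree begin

definition M :: "(nat list \<Rightarrow>\<^sub>0 int) \<Rightarrow> (nat list \<Rightarrow>\<^sub>0 int)" where
  "M x = frag_extend (delta_row d h) x"

definition D :: "nat list \<Rightarrow> nat list \<Rightarrow> int" where
  "D u w = (if w = u then int d else 0) - (if w \<in> V \<and> tree_adj u w then 1 else 0)"

lemma lookup_delta_row: "poly_mapping.lookup (delta_row d h u) w = D u w"
proof -
  have "(\<Sum>v\<in>{v \<in> V. tree_adj u v}. poly_mapping.lookup (frag_of v) w) =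
        (if w \<in> V \<and> tree_adj u w then 1 else 0)"
    using finV by (simp add: sum.delta)
  then show ?thesis
    unfolding delta_row_def D_def by (simp add: lookup_minus lookup_sum)
qed

lemma keys_delta_row: "u \<in> V \<Longrightarrow> Poly_Mapping.keys (delta_row d h u) \<subseteq> V"
  by (auto simp: in_keys_iff lookup_delta_row D_def split: if_splits)

lemma D_sym: "u \<in> V \<Longrightarrow> w \<in> V \<Longrightarrow> D u w = D w u"
  unfolding D_def tree_adj_def by auto

lemma lookup_M:
  assumes "x \<in> FA V" "w \<in> V"
  shows "poly_mapping.lookup (M x) w = int d * poly_mapping.lookup x w -
           (\<Sum>u\<in>{u \<in> V. tree_adj u w}. poly_mapping.lookup x u)"
proof -
  have "poly_mapping.lookup (M x) w = (\<Sum>u\<in>V. poly_mapping.lookup x u * D u w)"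
    unfolding M_def using lookup_fe[OF finV, of x "delta_row d h" w] assms
    by (simp add: FA_def lookup_delta_row)
  also have "\<dots> = (\<Sum>u\<in>V. (if w = u then int d * poly_mapping.lookup x u else 0)) -
       (\<Sum>u\<in>V. (if tree_adj u w then poly_mapping.lookup x u else 0))"
    using assms(2) by (subst sum_subtractf[symmetric], intro sum.cong) (auto simp: D_def algebra_simps)
  also have "\<dots> = int d * poly_mapping.lookup x w - (\<Sum>u\<in>{u \<in> V. tree_adj u w}. poly_mapping.lookup x u)"
    using finV assms(2) by (simp add: sum.inter_filter)
  finally show ?thesis .
qed

lemma M_add: "M (x + y) = M x + M y" unfolding M_def by (rule frag_extend_add)

lemma M_FA: "x \<in> FA V \<Longrightarrow> M x \<in> FA V"
  unfolding M_def by (rule fe_in_FA[OF keys_delta_row])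

definition tv :: "nat list \<Rightarrow> nat list \<Rightarrow> int" where
  "tv v w = (if w \<in> V \<and> (\<exists>s. w = v @ s) then th d (h + 1 - length w) else 0)"

definition uvec :: "nat list \<Rightarrow> (nat list \<Rightarrow>\<^sub>0 int)" where
  "uvec v = Abs_poly_mapping (tv v)"

lemma lookup_uvec: "poly_mapping.lookup (uvec v) = tv v"
proof -
  have "finite {w. tv v w \<noteq> 0}" using finV by (rule finite_subset[rotated]) (auto simp: tv_def split: if_splits)
  then show ?thesis by (simp add: uvec_def)
qed

lemma uvec_FA: "uvec v \<in> FA V"
  by (auto simp: FA_def in_keys_iff lookup_uvec tv_def split: if_splits)

lemma d_pos: "d \<ge> 2" using d3 by simp

lemma Mu_val:
  assumes v: "v \<in> V" and w: "w \<in> V"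
  shows "poly_mapping.lookup (M (uvec v)) w =
    (if w = v then (if v = [] then int d * (int d - 1) ^ h else th d (h + 2 - length v))
     else if v \<noteq> [] \<and> w = butlast v then - th d (h + 1 - length v) else 0)"
proof -
  have LM: "poly_mapping.lookup (M (uvec v)) w = int d * tv v w -
      ((if w = [] then 0 else tv v (butlast w)) + (\<Sum>i<nc w. tv v (w @ [i])))"
  proof -
    have "poly_mapping.lookup (M (uvec v)) w = int d * tv v w - (\<Sum>u\<in>{u \<in> V. tree_adj u w}. tv v u)"
      using lookup_M[OF uvec_FA w, of v] by (simp add: lookup_uvec)
    also have "\<dots> = int d * tv v w -
      ((if w = [] then 0 else tv v (butlast w)) + (\<Sum>i<nc w. tv v (w @ [i])))"
      by (subst sum_neighbors[OF w]) (rule refl)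
    finally show ?thesis .
  qed
  have chV: "w @ [i] \<in> V" if "i < nc w" for i
    using children_V[OF w] that unfolding children_def by blast
  have lw: "length w \<le> h" using len_V[OF w] .
  show ?thesis
  proof (cases "\<exists>s. w = v @ s")
    case True
    then obtain s where s: "w = v @ s" by blast
    have ch: "(\<Sum>i<nc w. tv v (w @ [i])) = int (nc w) * th d (h - length w)"
      using chV s by (simp add: tv_def)
    show ?thesis
    proof (cases "s = []")
      case False
      have wne: "w \<noteq> []" using s False by simp
      have "butlast w = v @ butlast s" using s False by (simp add: butlast_append)
      then have "tv v (butlast w) = th d (h + 1 - length (butlast w))"
        using butlast_V[OF w] by (auto simp: tv_def)
      moreover have "h + 1 - length (butlast w) = h + 2 - length w" using wne lw
        by (cases w rule: rev_cases) auto
      ultimately have par: "tv v (butlast w) = th d (h + 2 - length w)" by simp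
      have tw: "tv v w = th d (h + 1 - length w)" using w s by (simp add: tv_def)
      have val: "int d * th d (h + 1 - length w) - th d (h + 2 - length w)
                  - int (nc w) * th d (h - length w) = 0"
      proof (cases "length w < h")
        case True
        then have "nc w = d - 1" using wne by (simp add: nc_def)
        moreover have "th d (Suc (h + 1 - length w)) = int d * th d (h + 1 - length w)
             - (int d - 1) * th d (h + 1 - length w - 1)"
          by (rule th_rec) (use True in simp)
        moreover have "Suc (h + 1 - length w) = h + 2 - length w" "h + 1 - length w - 1 = h - length w"
          using True by auto
        moreover have "int (d - 1) = int d - 1" using d3 by simp
        ultimately show ?thesis by simp
      next
        case False
        then have "length w = h" using lw by simp
        moreover have "th d 2 = int d" by (simp add: th_def numeral_2_eq_2)
        ultimately show ?thesis by (simp add: nc_def)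
      qed
      have "w \<noteq> v" using s False by simp
      moreover have "\<not> (v \<noteq> [] \<and> w = butlast v)"
      proof
        assume a: "v \<noteq> [] \<and> w = butlast v"
        then have "length w < length v" by simp
        then show False using s by simp
      qed
      ultimately show ?thesis using LM ch par tw wne val by (auto simp: algebra_simps)
    next
      case True
      then have wv: "w = v" using s by simp
      have par: "(if w = [] then 0 else tv v (butlast w)) = 0"
      proof (cases "w = []")
        case False
        have "\<not> (\<exists>s'. butlast v = v @ s')"
        proof
          assume "\<exists>s'. butlast v = v @ s'"
          then obtain s' where "butlast v = v @ s'" by blast
          then have "length (butlast v) \<ge> length v" by (metis le_add1 length_append)
          moreover have "length v > 0" using False wv by simp
          ultimately show False unfolding length_butlast by linarith
        qed
        then show ?thesis using wv by (simp add: tv_def)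
      qed simp
      have tw: "tv v w = th d (h + 1 - length w)" using w wv by (simp add: tv_def)
      show ?thesis
      proof (cases "v = []")
        case True
        then have "nc w = d" using h1 wv by (simp add: nc_def)
        moreover have "th d (h + 1) = th d h + (int d - 1) ^ h" by (simp add: th_Suc)
        ultimately show ?thesis using LM ch par tw wv True by (simp add: algebra_simps)
      next
        case False
        have "int d * th d (h + 1 - length v) - int (nc v) * th d (h - length v) = th d (h + 2 - length v)"
        proof (cases "length v < h")
          case True
          then have "nc v = d - 1" using False by (simp add: nc_def)
          moreover have "th d (Suc (h + 1 - length v)) = int d * th d (h + 1 - length v)
               - (int d - 1) * th d (h + 1 - length v - 1)"
            by (rule th_rec) (use True in simp)
          moreover have "Suc (h + 1 - length v) = h + 2 - length v" "h + 1 - length v - 1 = h - length v"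
            using True by auto
          moreover have "int (d - 1) = int d - 1" using d3 by simp
          ultimately show ?thesis by simp
        next
          case False
          then have "length v = h" using lw wv by simp
          moreover have "th d 2 = int d" by (simp add: th_def numeral_2_eq_2)
          ultimately show ?thesis by (simp add: nc_def)
        qed
        then show ?thesis using LM ch par tw wv False by simp
      qed
    qed
  next
    case False
    have tw: "tv v w = 0" using False by (simp add: tv_def)
    have par: "(if w = [] then 0 else tv v (butlast w)) = 0"
    proof (cases "w = []")
      case False2: False
      have "\<not> (\<exists>s. butlast w = v @ s)"
      proof
        assume "\<exists>s. butlast w = v @ s"
        then obtain s where "butlast w = v @ s" by blast
        then have "w = v @ (s @ [last w])" using False2 by (metis append_assoc append_butlast_last_id)
        then show False using False by blast
      qed
      then show ?thesis by (simp add: tv_def)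
    qed simp
    have tvc: "tv v (w @ [i]) = (if v = w @ [i] then th d (h + 1 - length v) else 0)" for i
    proof -
      have "(\<exists>s. w @ [i] = v @ s) \<longleftrightarrow> v = w @ [i]"
      proof
        assume "\<exists>s. w @ [i] = v @ s"
        then obtain s where s: "w @ [i] = v @ s" by blast
        show "v = w @ [i]"
        proof (cases s rule: rev_cases)
          case Nil then show ?thesis using s by simp
        next
          case (snoc ys y) then show ?thesis using s False by auto
        qed
      qed auto
      then show ?thesis using v by (auto simp: tv_def)
    qed
    show ?thesis
    proof (cases "v \<noteq> [] \<and> w = butlast v")
      case True
      have vl: "v = w @ [last v]" using True by simp
      have "last v < nc w"
      proof -
        have "v \<in> children w" using children_V[OF w] v vl by blast
        then show ?thesis unfolding children_def using vl by auto
      qed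
      then have "(\<Sum>i<nc w. tv v (w @ [i])) = th d (h + 1 - length v)"
        unfolding tvc by (subst sum_single[of _ "last v"]) (use vl in auto)
      moreover have "w \<noteq> v" using True by (metis vl append_self_conv not_Cons_self2)
      ultimately show ?thesis using LM tw par True by simp
    next
      case False2: False
      have "v \<noteq> w @ [i]" for i using False2 by auto
      then have "(\<Sum>i<nc w. tv v (w @ [i])) = 0" unfolding tvc by simp
      moreover have "w \<noteq> v" using False by blast
      ultimately show ?thesis using LM tw par False2 by auto
    qed
  qed
qed

end

context tree begin

lemma lookup_M_D: "x \<in> FA V \<Longrightarrow> poly_mapping.lookup (M x) w = (\<Sum>u\<in>V. poly_mapping.lookup x u * D u w)"
  unfolding M_def using lookup_fe[OF finV, of x "delta_row d h" w] by (simp add: FA_def lookup_delta_row)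

lemma pair_sym:
  assumes "x \<in> FA V" "y \<in> FA V"
  shows "(\<Sum>w\<in>V. poly_mapping.lookup (M x) w * poly_mapping.lookup y w) =
         (\<Sum>w\<in>V. poly_mapping.lookup x w * poly_mapping.lookup (M y) w)"
proof -
  have "(\<Sum>w\<in>V. poly_mapping.lookup (M x) w * poly_mapping.lookup y w) =
        (\<Sum>w\<in>V. \<Sum>u\<in>V. poly_mapping.lookup x u * D u w * poly_mapping.lookup y w)"
    using assms(1) by (simp add: lookup_M_D sum_distrib_right)
  also have "\<dots> = (\<Sum>u\<in>V. \<Sum>w\<in>V. poly_mapping.lookup x u * D u w * poly_mapping.lookup y w)"
    by (rule sum.swap)
  also have "\<dots> = (\<Sum>u\<in>V. \<Sum>w\<in>V. poly_mapping.lookup x u * (poly_mapping.lookup y w * D w u))"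
    by (intro sum.cong refl) (simp add: D_sym algebra_simps)
  also have "\<dots> = (\<Sum>w\<in>V. poly_mapping.lookup x w * poly_mapping.lookup (M y) w)"
    using assms(2) by (simp add: lookup_M_D sum_distrib_left)
  finally show ?thesis .
qed

lemma Mu_diag_pos: "v \<in> V \<Longrightarrow> poly_mapping.lookup (M (uvec v)) v > 0"
proof -
  assume v: "v \<in> V"
  have "length v \<le> h" using len_V[OF v] .
  then have "th d (h + 2 - length v) \<ge> 1" using th_pos[OF d_pos] by simp
  moreover have "int d * (int d - 1) ^ h > 0" using d3 by simp
  ultimately show ?thesis using Mu_val[OF v v] by auto
qed

lemma M_inj: "inj_on M (FA V)"
proof (rule inj_onI)
  fix x y assume xy: "x \<in> FA V" "y \<in> FA V" "M x = M y"
  define z where "z = x - y"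
  have z: "z \<in> FA V" using sgrp_diff[OF sgrp_FA xy(1,2)] by (simp add: z_def)
  have Mz: "M z = 0"
  proof -
    have "M x = M (z + y)" by (simp add: z_def)
    then show ?thesis using xy(3) by (simp add: M_add)
  qed
  have key: "\<And>v. v \<in> V \<Longrightarrow> length v = n \<Longrightarrow> poly_mapping.lookup z v = 0" for n
  proof (induction n rule: less_induct)
    case (less n)
    fix v assume v: "v \<in> V" and ln: "length v = n"
    have "0 = (\<Sum>w\<in>V. poly_mapping.lookup (M z) w * poly_mapping.lookup (uvec v) w)"
      using Mz by simp
    also have "\<dots> = (\<Sum>w\<in>V. poly_mapping.lookup z w * poly_mapping.lookup (M (uvec v)) w)"
      by (rule pair_sym[OF z uvec_FA])
    also have "\<dots> = poly_mapping.lookup z v * poly_mapping.lookup (M (uvec v)) v"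
    proof (rule sum_single[OF finV v])
      fix w assume w: "w \<in> V" "w \<noteq> v"
      show "poly_mapping.lookup z w * poly_mapping.lookup (M (uvec v)) w = 0"
      proof (cases "v \<noteq> [] \<and> w = butlast v")
        case True
        then have "length w = length v - 1" by simp
        moreover have "length v > 0" using True by simp
        ultimately have "length w < n" using ln by linarith
        then have "poly_mapping.lookup z w = 0" using less w by blast
        then show ?thesis by simp
      next
        case False
        then show ?thesis using Mu_val[OF v w(1)] w by auto
      qed
    qed
    finally show "poly_mapping.lookup z v = 0" using Mu_diag_pos[OF v] by simp
  qed
  have "z = 0"
  proof (rule poly_mapping_eqI)
    fix v show "poly_mapping.lookup z v = poly_mapping.lookup 0 v"
    proof (cases "v \<in> V")
      case True then show ?thesis using key by simp
    next
      case False then show ?thesis using z by (auto simp: FA_def in_keys_iff)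
    qed
  qed
  then show "x = y" by (simp add: z_def)
qed

lemma fe_comp:
  assumes "c \<in> FA V"
  shows "M (frag_extend uvec c) = frag_extend (M \<circ> uvec) c"
proof -
  have "M (frag_extend uvec c) = M (\<Sum>w\<in>V. frag_cmul (poly_mapping.lookup c w) (uvec w))"
    using fe_eq_sum[OF finV, of c uvec] assms by (simp add: FA_def)
  also have "\<dots> = (\<Sum>w\<in>V. frag_cmul (poly_mapping.lookup c w) (M (uvec w)))"
    unfolding M_def using finV by (simp add: frag_extend_sum frag_extend_cmul o_def)
  also have "\<dots> = frag_extend (M \<circ> uvec) c"
    using fe_eq_sum[OF finV, of c "M \<circ> uvec"] assms by (simp add: FA_def)
  finally show ?thesis .
qed

lemma zspan_comp: "zspan V (M \<circ> uvec) = M ` zspan V uvec"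
  unfolding zspan_def using fe_comp by (auto simp: image_image)

lemma generate_eq: "delta_lattice d h = zspan V (delta_row d h)"
proof
  let ?F = "free_Abelian_group V"
  have grp: "group ?F" by simp
  have sub: "delta_row d h ` V \<subseteq> carrier ?F" using keys_delta_row by auto
  show "delta_lattice d h \<subseteq> zspan V (delta_row d h)"
    unfolding delta_lattice_def
  proof
    fix x assume "x \<in> generate ?F (delta_row d h ` V)"
    then show "x \<in> zspan V (delta_row d h)"
    proof (induction rule: generate.induct)
      case one
      then show ?case using sgrp_0[OF sgrp_zspan] by simp
    next
      case (incl g)
      then obtain v where v: "v \<in> V" "g = delta_row d h v" by auto
      then show ?case unfolding zspan_def by (intro image_eqI[of _ _ "frag_of v"]) (auto simp: FA_def)
    next
      case (inv g)
      then obtain v where v: "v \<in> V" "g = delta_row d h v" by auto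
      then have "inv\<^bsub>?F\<^esub> g = - g" using keys_delta_row by simp
      moreover have "g \<in> zspan V (delta_row d h)"
        unfolding zspan_def using v by (intro image_eqI[of _ _ "frag_of v"]) (auto simp: FA_def)
      ultimately show ?case using sgrp_uminus[OF sgrp_zspan] by simp
    next
      case (eng h1 h2)
      then show ?case using sgrp_add[OF sgrp_zspan] by simp
    qed
  qed
  show "zspan V (delta_row d h) \<subseteq> delta_lattice d h"
  proof
    fix x assume "x \<in> zspan V (delta_row d h)"
    then obtain c where c: "c \<in> FA V" "x = frag_extend (delta_row d h) c" by (auto simp: zspan_def)
    have "Poly_Mapping.keys c \<subseteq> V" using c by (simp add: FA_def)
    then have "frag_extend (delta_row d h) c \<in> generate ?F (delta_row d h ` V)"
    proof (rule free_Abelian_group_induct[where P = "\<lambda>c. frag_extend (delta_row d h) c \<in> generate ?F (delta_row d h ` V)"])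
      show "frag_extend (delta_row d h) 0 \<in> generate ?F (delta_row d h ` V)"
        using generate.one[of ?F] by simp
    next
      fix a b
      assume 2: "frag_extend (delta_row d h) a \<in> generate ?F (delta_row d h ` V)"
        "frag_extend (delta_row d h) b \<in> generate ?F (delta_row d h ` V)"
      have gb: "frag_extend (delta_row d h) b \<in> carrier ?F"
        using group.generate_in_carrier[OF grp sub] 2 by blast
      have i: "inv\<^bsub>?F\<^esub> (frag_extend (delta_row d h) b) \<in> generate ?F (delta_row d h ` V)"
        by (rule group.generate_m_inv_closed[OF grp sub 2(2)])
      have e: "frag_extend (delta_row d h) a \<otimes>\<^bsub>?F\<^esub> inv\<^bsub>?F\<^esub> (frag_extend (delta_row d h) b)
                  \<in> generate ?F (delta_row d h ` V)"
        by (rule generate.eng[OF 2(1) i])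
      have iv: "inv\<^bsub>?F\<^esub> (frag_extend (delta_row d h) b) = - frag_extend (delta_row d h) b"
        using gb by (simp only: carrier_free_Abelian_group_iff inv_free_Abelian_group)
      have "frag_extend (delta_row d h) (a - b) =
          frag_extend (delta_row d h) a \<otimes>\<^bsub>?F\<^esub> inv\<^bsub>?F\<^esub> (frag_extend (delta_row d h) b)"
        unfolding iv mult_free_Abelian_group frag_extend_diff by simp
      then show "frag_extend (delta_row d h) (a - b) \<in> generate ?F (delta_row d h ` V)"
        using e by simp
    next
      fix a assume "a \<in> V"
      then show "frag_extend (delta_row d h) (frag_of a) \<in> generate ?F (delta_row d h ` V)"
      proof -
        have "delta_row d h a \<in> delta_row d h ` V" using \<open>a \<in> V\<close> by blast
        then show ?thesis using generate.incl[of "delta_row d h a" "delta_row d h ` V" ?F] by simp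
      qed
    qed
    then show "x \<in> delta_lattice d h" using c by (simp add: delta_lattice_def)
  qed
qed

lemma order_eq: "order (sandpile_group d h) = card (cosets (FA V) (delta_lattice d h))"
proof -
  have "rcosets\<^bsub>free_Abelian_group V\<^esub> (delta_lattice d h) = cosets (FA V) (delta_lattice d h)"
  proof -
    have "\<And>a. delta_lattice d h #>\<^bsub>free_Abelian_group V\<^esub> a = (\<lambda>b. b + a) ` delta_lattice d h"
      unfolding r_coset_def by auto
    moreover have "carrier (free_Abelian_group V) = {x. Poly_Mapping.keys x \<subseteq> V}" by auto
    ultimately show ?thesis unfolding RCOSETS_def cosets_def FA_def
      by (simp add: UNION_singleton_eq_range)
  qed
  then show ?thesis by (simp add: order_def sandpile_group_def FactGroup_def)
qed

lemma main_int:
  "int (order (sandpile_group d h)) * (\<Prod>v\<in>V. th d (h + 1 - length v)) =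
   (\<Prod>v\<in>V. poly_mapping.lookup (M (uvec v)) v)"
proof -
  let ?A = "FA V"
  let ?L = "zspan V (delta_row d h)"
  let ?LU = "zspan V uvec"
  let ?L' = "zspan V (M \<circ> uvec)"
  have LM: "?L = M ` ?A" by (simp add: zspan_def M_def[abs_def])
  have LU_A: "?LU \<subseteq> ?A" by (rule zspan_sub) (use uvec_FA in \<open>auto simp: FA_def\<close>)
  have L_A: "?L \<subseteq> ?A" by (rule zspan_sub) (use keys_delta_row in auto)
  have L'_L: "?L' \<subseteq> ?L" unfolding zspan_comp LM using LU_A by auto
  have gkU: "\<And>v. v \<in> V \<Longrightarrow> Poly_Mapping.keys (uvec v) \<subseteq> V" using uvec_FA by (simp add: FA_def)
  have luv: "poly_mapping.lookup (uvec v) v = th d (h + 1 - length v)" if "v \<in> V" for v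
    using that by (simp add: lookup_uvec tv_def)
  have posU: "\<And>v. v \<in> V \<Longrightarrow> poly_mapping.lookup (uvec v) v > 0"
  proof -
    fix v assume v: "v \<in> V"
    have "th d (h + 1 - length v) \<ge> 1" using th_pos[OF d_pos] len_V[OF v] by simp
    then show "poly_mapping.lookup (uvec v) v > 0" using luv[OF v] by simp
  qed
  have triU: "\<And>v w. v \<in> V \<Longrightarrow> poly_mapping.lookup (uvec v) w \<noteq> 0 \<Longrightarrow> w = v \<or> h - length w < h - length v"
  proof -
    fix v w assume v: "v \<in> V" and nz: "poly_mapping.lookup (uvec v) w \<noteq> 0"
    then obtain s where w: "w \<in> V" "w = v @ s" by (auto simp: lookup_uvec tv_def split: if_splits)
    show "w = v \<or> h - length w < h - length v"
    proof (cases "s = []")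
      case False
      then have "length w > length v" using w by simp
      moreover have "length w \<le> h" using len_V[OF w(1)] .
      ultimately show ?thesis by linarith
    qed (use w in simp)
  qed
  have "\<exists>B. resid ?A ?LU B \<and> card B = (\<Prod>v\<in>V. nat (poly_mapping.lookup (uvec v) v))"
    by (rule box_lemma[of V uvec "\<lambda>v. h - length v", OF finV gkU posU triU])
  then obtain BU where BU: "resid ?A ?LU BU" "card BU = (\<Prod>v\<in>V. nat (poly_mapping.lookup (uvec v) v))"
    by blast
  have gk': "\<And>v. v \<in> V \<Longrightarrow> Poly_Mapping.keys ((M \<circ> uvec) v) \<subseteq> V"
    using M_FA[OF uvec_FA] by (simp add: FA_def)
  have pos': "\<And>v. v \<in> V \<Longrightarrow> poly_mapping.lookup ((M \<circ> uvec) v) v > 0"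
    using Mu_diag_pos by simp
  have tri': "\<And>v w. v \<in> V \<Longrightarrow> poly_mapping.lookup ((M \<circ> uvec) v) w \<noteq> 0 \<Longrightarrow> w = v \<or> length w < length v"
  proof -
    fix v w assume v: "v \<in> V" and nz: "poly_mapping.lookup ((M \<circ> uvec) v) w \<noteq> 0"
    have w: "w \<in> V"
    proof (rule ccontr)
      assume "w \<notin> V"
      then have "w \<notin> Poly_Mapping.keys (M (uvec v))" using M_FA[OF uvec_FA] by (auto simp: FA_def)
      then show False using nz by (simp add: in_keys_iff)
    qed
    show "w = v \<or> length w < length v"
      using nz Mu_val[OF v w] by (auto split: if_splits)
  qed
  have "\<exists>B. resid ?A ?L' B \<and> card B = (\<Prod>v\<in>V. nat (poly_mapping.lookup ((M \<circ> uvec) v) v))"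
    by (rule box_lemma[of V "M \<circ> uvec" length, OF finV gk' pos' tri'])
  then obtain B' where B': "resid ?A ?L' B'" "card B' = (\<Prod>v\<in>V. nat (poly_mapping.lookup ((M \<circ> uvec) v) v))"
    by blast
  have hom: "resid (M ` ?A) (M ` ?LU) (M ` BU) \<and> card (M ` BU) = card BU"
    by (rule resid_hom[OF M_add M_inj sgrp_FA LU_A BU(1)])
  then have hom': "resid ?L ?L' (M ` BU)" "card (M ` BU) = card BU"
    using LM zspan_comp by auto
  obtain R where R: "resid ?A ?L R" using resid_exists[OF sgrp_zspan L_A sgrp_FA] by blast
  have tw: "resid ?A ?L' ((\<lambda>(x,y). x + y) ` (R \<times> M ` BU)) \<and>
      card ((\<lambda>(x,y). x + y) ` (R \<times> M ` BU)) = card R * card (M ` BU)"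
    by (rule resid_tower[OF sgrp_FA sgrp_zspan sgrp_zspan L'_L L_A R hom'(1)])
  have "card B' = card R * card BU"
    using resid_card_eq[OF sgrp_zspan B'(1) conjunct1[OF tw]] conjunct2[OF tw] hom'(2) by simp
  moreover have "card R = order (sandpile_group d h)"
    using resid_card_cosets[OF sgrp_zspan R] order_eq generate_eq by simp
  ultimately have nat_eq: "(\<Prod>v\<in>V. nat (poly_mapping.lookup ((M \<circ> uvec) v) v)) =
       order (sandpile_group d h) * (\<Prod>v\<in>V. nat (poly_mapping.lookup (uvec v) v))"
    using B'(2) BU(2) by simp
  have i1: "int (\<Prod>v\<in>V. nat (poly_mapping.lookup ((M \<circ> uvec) v) v)) = (\<Prod>v\<in>V. poly_mapping.lookup (M (uvec v)) v)"
    unfolding of_nat_prod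
  proof (intro prod.cong refl)
    fix v assume "v \<in> V"
    then show "int (nat (poly_mapping.lookup ((M \<circ> uvec) v) v)) = poly_mapping.lookup (M (uvec v)) v"
      using Mu_diag_pos[of v] by simp
  qed
  have i2: "int (\<Prod>v\<in>V. nat (poly_mapping.lookup (uvec v) v)) = (\<Prod>v\<in>V. th d (h + 1 - length v))"
    unfolding of_nat_prod
  proof (intro prod.cong refl)
    fix v assume "v \<in> V"
    then show "int (nat (poly_mapping.lookup (uvec v) v)) = th d (h + 1 - length v)"
      using posU[of v] luv[of v] by simp
  qed
  have e: "int (\<Prod>v\<in>V. nat (poly_mapping.lookup ((M \<circ> uvec) v) v)) =
      int (order (sandpile_group d h)) * int (\<Prod>v\<in>V. nat (poly_mapping.lookup (uvec v) v))"
    unfolding nat_eq of_nat_mult ..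
  show ?thesis using e unfolding i1 i2 by (rule sym)
qed

end

context tree begin

definition lev :: "nat \<Rightarrow> nat list set" where
  "lev n = {w \<in> V. length w = n}"

definition ncl :: "nat \<Rightarrow> nat" where
  "ncl n = (if n < h then (if n = 0 then d else d - 1) else 0)"

lemma nc_ncl: "nc w = ncl (length w)" by (simp add: nc_def ncl_def)

lemma children_disj: "w \<noteq> w' \<Longrightarrow> children w \<inter> children w' = {}"
  unfolding children_def by auto

lemma nonroot_split: "V - {[]} = (\<Union>w\<in>V. children w)"
proof
  show "V - {[]} \<subseteq> (\<Union>w\<in>V. children w)"
  proof
    fix u assume u: "u \<in> V - {[]}"
    then have e: "u = butlast u @ [last u]" by simp
    have bV: "butlast u \<in> V" using butlast_V u by auto
    have "u \<in> {ua \<in> V. \<exists>i. ua = butlast u @ [i]}" using u e by blast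
    then have "u \<in> children (butlast u)" using children_V[OF bV] by simp
    then show "u \<in> (\<Union>w\<in>V. children w)" using \<open>butlast u \<in> V\<close> by blast
  qed
  show "(\<Union>w\<in>V. children w) \<subseteq> V - {[]}"
    using children_V by auto
qed

lemma prod_children:
  "(\<Prod>u\<in>children w. th d (h + 2 - length u)) = th d (h + 1 - length w) ^ nc w"
proof -
  have "(\<Prod>u\<in>children w. th d (h + 2 - length u)) = (\<Prod>i<nc w. th d (h + 2 - length (w @ [i])))"
    unfolding children_def by (subst prod.reindex) (auto simp: inj_on_def)
  also have "\<dots> = (\<Prod>i<nc w. th d (h + 1 - length w))" by simp
  also have "\<dots> = th d (h + 1 - length w) ^ nc w" by simp
  finally show ?thesis .
qed

lemma step2: "(\<Prod>v\<in>V - {[]}. th d (h + 2 - length v)) = (\<Prod>w\<in>V. th d (h + 1 - length w) ^ nc w)"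
proof -
  have "(\<Prod>v\<in>V - {[]}. th d (h + 2 - length v)) = (\<Prod>w\<in>V. \<Prod>u\<in>children w. th d (h + 2 - length u))"
    unfolding nonroot_split
    by (rule prod.UNION_disjoint) (use finV finite_children children_disj in auto)
  also have "\<dots> = (\<Prod>w\<in>V. th d (h + 1 - length w) ^ nc w)"
    by (intro prod.cong refl) (rule prod_children)
  finally show ?thesis .
qed

lemma th_pos': "length w \<le> h \<Longrightarrow> th d (h + 1 - length w) \<ge> 1"
  using th_pos[OF d_pos] by simp

lemma step3: "(\<Prod>w\<in>V. th d (h + 1 - length w) ^ nc w) =
   (\<Prod>w\<in>V. th d (h + 1 - length w)) * (\<Prod>w\<in>V. th d (h + 1 - length w) ^ (nc w - 1))"
proof -
  have "th d (h + 1 - length w) ^ nc w = th d (h + 1 - length w) * th d (h + 1 - length w) ^ (nc w - 1)"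
    if "w \<in> V" for w
  proof (cases "nc w = 0")
    case True
    then have "length w = h" using len_V[OF that] d3 by (auto simp: nc_def split: if_splits)
    then show ?thesis using True by simp
  next
    case False
    then show ?thesis by (metis power_eq_if)
  qed
  then show ?thesis by (simp add: prod.distrib[symmetric])
qed

lemma card_lev: "n \<le> h \<Longrightarrow> card (lev n) = (if n = 0 then 1 else d * (d - 1) ^ (n - 1))"
proof (induction n)
  case 0
  have "lev 0 = {[]}" by (auto simp: lev_def)
  then show ?case by simp
next
  case (Suc n)
  have fl: "finite (lev n)" using finV by (simp add: lev_def)
  have eq: "lev (Suc n) = (\<Union>w\<in>lev n. children w)"
  proof
    show "lev (Suc n) \<subseteq> (\<Union>w\<in>lev n. children w)"
    proof
      fix u assume u: "u \<in> lev (Suc n)"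
      then have un: "u \<in> V" "u \<noteq> []" "length u = Suc n" by (auto simp: lev_def)
      then have "u \<in> (\<Union>w\<in>V. children w)" using nonroot_split by auto
      then obtain w where w: "w \<in> V" "u \<in> children w" by blast
      then have "length w = n" using un unfolding children_def by auto
      then show "u \<in> (\<Union>w\<in>lev n. children w)" using w by (auto simp: lev_def)
    qed
    show "(\<Union>w\<in>lev n. children w) \<subseteq> lev (Suc n)"
      using children_V unfolding lev_def children_def by auto
  qed
  have "card (lev (Suc n)) = (\<Sum>w\<in>lev n. card (children w))"
    unfolding eq by (rule card_UN_disjoint) (use fl finite_children children_disj in auto)
  also have "\<dots> = (\<Sum>w\<in>lev n. ncl n)"
    by (intro sum.cong refl) (simp add: card_children nc_ncl lev_def)
  also have "\<dots> = card (lev n) * ncl n" by simp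
  also have "\<dots> = (if Suc n = 0 then 1 else d * (d - 1) ^ (Suc n - 1))"
  proof (cases n)
    case 0
    then show ?thesis using Suc.IH Suc.prems by (simp add: ncl_def)
  next
    case (Suc m)
    then have "card (lev n) = d * (d - 1) ^ m" "ncl n = d - 1"
      using Suc.IH \<open>Suc n \<le> h\<close> by (auto simp: ncl_def)
    then show ?thesis using Suc by (simp add: algebra_simps)
  qed
  finally show ?case .
qed

lemma step5:
  "(\<Prod>w\<in>V. th d (h + 1 - length w) ^ (nc w - 1)) =
   (\<Prod>n\<in>{0..h}. (th d (h + 1 - n) ^ (ncl n - 1)) ^ card (lev n))"
proof -
  have "(\<Prod>w\<in>V. th d (h + 1 - length w) ^ (nc w - 1)) =
        (\<Prod>n\<in>{0..h}. \<Prod>w\<in>{w \<in> V. length w = n}. th d (h + 1 - length w) ^ (nc w - 1))"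
    by (rule prod.group[symmetric]) (use finV len_V in auto)
  also have "\<dots> = (\<Prod>n\<in>{0..h}. (th d (h + 1 - n) ^ (ncl n - 1)) ^ card (lev n))"
    by (intro prod.cong refl) (simp add: lev_def nc_ncl)
  finally show ?thesis .
qed

lemma t1: "ncl 0 = d" "card (lev 0) = 1" "ncl h = 0" using h1 card_lev[of 0] by (auto simp: ncl_def)
lemma t2: "n \<in> {1..h - 1} \<Longrightarrow> ncl n - 1 = d - 2"  by (auto simp: ncl_def)
lemma t3: "n \<in> {1..h - 1} \<Longrightarrow> card (lev n) = d * (d - 1) ^ (n - 1)" using card_lev[of n] by auto
lemma p1: "(\<Prod>n\<in>{0..h}. (th d (h + 1 - n) ^ (ncl n - 1)) ^ card (lev n)) =
     (th d (h + 1) ^ (ncl 0 - 1)) ^ card (lev 0) * ((th d 1 ^ (ncl h - 1)) ^ card (lev h) *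
     (\<Prod>n = 1..h - 1. (th d (h + 1 - n) ^ (ncl n - 1)) ^ card (lev n)))"
proof -
  have set: "{0..h} = insert 0 (insert h {1..h - 1})" using h1 by auto
  have f: "finite {1..h - 1}" by simp
  have nh: "h \<notin> {1..h - 1}" using h1 by auto
  have n0: "0 \<notin> insert h {1..h - 1}" using h1 by auto
  have a: "h + 1 - 0 = h + 1" "h + 1 - h = 1" by simp_all
  show ?thesis unfolding set
    by (simp only: prod.insert[OF finite.insertI[OF f] n0] prod.insert[OF f nh] a)
qed
lemma p3: "n \<in> {1..h - 1} \<Longrightarrow> (th d (h + 1 - n) ^ (ncl n - 1)) ^ card (lev n) = th d (h + 1 - n) ^ ((d - 2) * d * (d - 1) ^ (n - 1))"
  using t2 t3 by (simp add: power_mult mult.assoc)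

lemma step7:
  "(\<Prod>n\<in>{0..h}. (th d (h + 1 - n) ^ (ncl n - 1)) ^ card (lev n)) =
   th d (h + 1) ^ (d - 1) * (\<Prod>n = 1..h - 1. th d (h + 1 - n) ^ ((d - 2) * d * (d - 1) ^ (n - 1)))"
proof -
  have c: "(\<Prod>n = 1..h - 1. (th d (h + 1 - n) ^ (ncl n - 1)) ^ card (lev n)) =
     (\<Prod>n = 1..h - 1. th d (h + 1 - n) ^ ((d - 2) * d * (d - 1) ^ (n - 1)))"
    by (rule prod.cong[OF refl p3])
  show ?thesis unfolding p1 t1 th_1 c power_one power_one_right mult_1 ..
qed

lemma int_formula:
  "int (order (sandpile_group d h)) =
   int d * (int d - 1) ^ h * (th d (h + 1) ^ (d - 1) *
     (\<Prod>n = 1..h - 1. th d (h + 1 - n) ^ ((d - 2) * d * (d - 1) ^ (n - 1))))"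
proof -
  let ?Q = "\<Prod>w\<in>V. th d (h + 1 - length w)"
  let ?E = "\<Prod>w\<in>V. th d (h + 1 - length w) ^ (nc w - 1)"
  have "(\<Prod>v\<in>V. poly_mapping.lookup (M (uvec v)) v) =
        poly_mapping.lookup (M (uvec [])) [] * (\<Prod>v\<in>V - {[]}. poly_mapping.lookup (M (uvec v)) v)"
    by (rule prod.remove[OF finV nil_V])
  also have "\<dots> = int d * (int d - 1) ^ h * (\<Prod>v\<in>V - {[]}. th d (h + 2 - length v))"
  proof -
    have "(\<Prod>v\<in>V - {[]}. poly_mapping.lookup (M (uvec v)) v) = (\<Prod>v\<in>V - {[]}. th d (h + 2 - length v))"
      by (intro prod.cong refl) (simp add: Mu_val)
    then show ?thesis using Mu_val[OF nil_V nil_V] by simp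
  qed
  also have "\<dots> = int d * (int d - 1) ^ h * (?Q * ?E)" unfolding step2 step3 by (rule refl)
  finally have "int (order (sandpile_group d h)) * ?Q = (int d * (int d - 1) ^ h * ?E) * ?Q"
    using main_int by (simp add: algebra_simps)
  moreover have "?Q > 0" using th_pos' len_V by (intro prod_pos) fastforce
  ultimately have "int (order (sandpile_group d h)) = int d * (int d - 1) ^ h * ?E" by simp
  then show ?thesis unfolding step5 step7 .
qed

end

lemma theta_th: "d \<ge> 3 \<Longrightarrow> theta d m = real_of_int (th d m)"
proof -
  assume d: "d \<ge> 3"
  have "real d - 1 \<noteq> 1" using d by simp
  then have "(\<Sum>i<m. (real d - 1) ^ i) = ((real d - 1) ^ m - 1) / (real d - 1 - 1)"
    by (rule geometric_sum)
  moreover have "real d - 1 - 1 = real d - 2" by simp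
  moreover have "real_of_int (th d m) = (\<Sum>i<m. (real d - 1) ^ i)"
    using d by (simp add: th_def)
  ultimately show ?thesis by (simp add: theta_def)
qed

theorem theorem2p5:
  fixes d h :: nat
  assumes "d \<ge> 3" and "h \<ge> 1"
  shows "real (order (sandpile_group d h)) =
    real d * (real d - 1) ^ h * (theta d (h + 1)) ^ (d - 1) *
    (\<Prod>n = 1..h - 1. (theta d (h + 1 - n)) ^ ((d - 2) * d * (d - 1) ^ (n - 1)))"
proof -
  interpret tree d h using assms by unfold_locales
  have "real (order (sandpile_group d h)) = real_of_int (int (order (sandpile_group d h)))" by simp
  also have "\<dots> = real_of_int (int d * (int d - 1) ^ h * (th d (h + 1) ^ (d - 1) *
     (\<Prod>n = 1..h - 1. th d (h + 1 - n) ^ ((d - 2) * d * (d - 1) ^ (n - 1)))))"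
    unfolding int_formula ..
  also have "\<dots> = real d * (real d - 1) ^ h * (theta d (h + 1)) ^ (d - 1) *
    (\<Prod>n = 1..h - 1. (theta d (h + 1 - n)) ^ ((d - 2) * d * (d - 1) ^ (n - 1)))"
    by (simp add: theta_th[OF assms(1)] of_int_prod mult.assoc)
  finally show ?thesis .
qed

end
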